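(* Let $n \in \mathbb{N}$. (i) Let $p, q \in \mathbb{N}$ with $5F_{n+2}-4 \le p < 5F_{n+3}-4$, $5F_{n+1}-4 \le q < 5F_{n+2}-4$ and $b_q = a_p + 1$. Then: (i.1) if $b_{q+1} - b_q = 3$, then $a_{p+1} = a_p + 2$, $a_{p+2} = a_p + 3$ and $b_{q+1} = a_{p+2} + 1$; (i.2) if $b_{q+1} - b_q = 2$, then $a_{p+1} = a_p + 2$ and $b_{q+1} = a_{p+1} + 1$. (ii) $\{a_{5F_{n+2}-4+u} : u = 0,1,\dots,5F_{n+1}\} \cup \{b_{5F_{n+1}-4+u} : u = 0,1,\dots,5F_n\} = \{5F_{n+3}-4, 5F_{n+3}-3, \dots, 5F_{n+4}-3\}$. (iii) $\{a_{5F_{n+2}-4+u} : u = 0,1,\dots,5F_{n+1}\} \cap \{b_{5F_{n+1}-4+u} : u = 0,1,\dots,5F_n\} = \emptyset$. (iv) $\{a_m : m \in \mathbb{N}\} \cap \{b_m : m \in \mathbb{N}\} = \emptyset$. (v) $\{a_m : m \in \mathbb{N}\} \cup \{b_m : m \in \mathbb{N}\} = \{6,7,8,\dots\}$.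
   Context: Fibonacci numbers: $F_1 = F_2 = 1$, $F_{i+2} = F_{i+1} + F_i$. Let $\sigma$ be the substitution on finite sequences over $\{1,2\}$ replacing each entry $1$ by $2$ and each entry $2$ by $2,1$. Let $C_{1,1} = (1)$, $C_{i+1,1} = \sigma(C_{i,1})$. For $i \in \mathbb{N}$ let $C_i$ be the concatenation of five copies of $C_{i,1}$. Let $(c_n)_{n \in \mathbb{N}}$ be the infinite sequence obtained by concatenating $C_1, C_2, C_3, \dots$ in order, and let $d_n = c_n + 1$. Define $a_1 = 6$, $a_n = 6 + \sum_{i=1}^{n-1} c_i$, and $b_1 = 12$, $b_n = 12 + \sum_{i=1}^{n-1} d_i$ for $n \in \mathbb{N}$. *)

theory Defs
  imports "HOL-Number_Theory.Fib"
begin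

text \<open>Fibonacci numbers: F_i = fib i (library: fib 1 = fib 2 = 1).\<close>

definition sigma :: "nat list \<Rightarrow> nat list" where
  "sigma xs = concat (map (\<lambda>x. if x = 1 then [2] else [2, 1]) xs)"

definition Cblk :: "nat \<Rightarrow> nat list" where
  "Cblk i = (sigma ^^ (i - 1)) [1]"

definition Cfive :: "nat \<Rightarrow> nat list" where
  "Cfive i = concat (replicate 5 (Cblk i))"

text \<open>c_n (1-indexed): the n-th entry of C_1 C_2 C_3 ...; the prefix C_1...C_n
  has length at least 5n >= n, so it contains position n.\<close>
definition cseq :: "nat \<Rightarrow> nat" where
  "cseq n = concat (map Cfive [1..<n+1]) ! (n - 1)"

definition dseq :: "nat \<Rightarrow> nat" where
  "dseq n = cseq n + 1"

definition aseq :: "nat \<Rightarrow> nat" where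
  "aseq n = 6 + (\<Sum>i\<in>{1..<n}. cseq i)"

definition bseq :: "nat \<Rightarrow> nat" where
  "bseq n = 12 + (\<Sum>i\<in>{1..<n}. dseq i)"

end

theory Submission
  imports Defs
begin

declare fib.simps(3)[simp del]
lemma fib_small[simp]: "fib 3 = 2" "fib 4 = 3" "fib (Suc (Suc 0)) = 1" "fib (Suc (Suc (Suc 0))) = 2"
  by (simp_all add: fib.simps(3) numeral_eq_Suc)

lemma sigma_Nil[simp]: "sigma [] = []" by (simp add: sigma_def)
lemma sigma_Cons[simp]: "sigma (x#xs) = (if x = 1 then 2 # sigma xs else 2 # 1 # sigma xs)"
  by (simp add: sigma_def)
lemma sigma_append[simp]: "sigma (xs @ ys) = sigma xs @ sigma ys" by (simp add: sigma_def)
lemma sigma_concat_rep: "sigma (concat (replicate k w)) = concat (replicate k (sigma w))"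
  by (induction k) auto

lemma sigma_set: "set (sigma w) \<subseteq> {1,2}" by (induction w) auto
lemma sigma_len: "set w \<subseteq> {1,2} \<Longrightarrow> length (sigma w) = sum_list w" by (induction w) auto
lemma sigma_sum: "set w \<subseteq> {1,2} \<Longrightarrow> sum_list (sigma w) = sum_list w + length w" by (induction w) auto

lemma Cblk_1[simp]: "Cblk 1 = [1]" by (simp add: Cblk_def)
lemma rep_len: "length (concat (replicate k w)) = k * length w" by (induction k) auto
lemma rep_sum: "sum_list (concat (replicate k (w::nat list))) = k * sum_list w" by (induction k) auto
lemma rep_set: "set (concat (replicate k w)) \<subseteq> set w" by (induction k) auto
lemma Cblk_Suc: "n \<ge> 1 \<Longrightarrow> Cblk (Suc n) = sigma (Cblk n)"
  by (cases n) (auto simp: Cblk_def)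
lemma Cblk_set: "set (Cblk n) \<subseteq> {1,2}"
proof -
  have "set ((sigma ^^ m) [1]) \<subseteq> {1,2}" for m
    using sigma_set by (cases m) auto
  then show ?thesis by (simp add: Cblk_def)
qed

lemma Cblk_len_sum: "n \<ge> 1 \<Longrightarrow> length (Cblk n) = fib n \<and> sum_list (Cblk n) = fib (Suc n)"
proof (induction n rule: nat_induct_at_least)
  case base then show ?case by (simp add: fib.simps(3) Cblk_def)
next
  case (Suc n)
  have e: "Cblk (Suc n) = sigma (Cblk n)" using Suc(1) by (rule Cblk_Suc)
  have l: "length (Cblk (Suc n)) = sum_list (Cblk n)" unfolding e using Cblk_set[of n] by (rule sigma_len)
  have s: "sum_list (Cblk (Suc n)) = sum_list (Cblk n) + length (Cblk n)" unfolding e using Cblk_set[of n] by (rule sigma_sum)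
  have f: "fib (Suc (Suc n)) = fib (Suc n) + fib n" by (rule fib.simps(3))
  show ?case using Suc(2) l s f by linarith
qed

lemma Cfive_set: "set (Cfive n) \<subseteq> {1,2}" unfolding Cfive_def by (rule order_trans[OF rep_set Cblk_set])
lemma Cfive_Suc: "n \<ge> 1 \<Longrightarrow> Cfive (Suc n) = sigma (Cfive n)"
  by (simp add: Cfive_def Cblk_Suc sigma_concat_rep)
lemma Cfive_len: "n \<ge> 1 \<Longrightarrow> length (Cfive n) = 5 * fib n"
  using Cblk_len_sum[of n] by (simp add: Cfive_def rep_len)
lemma Cfive_sum: "n \<ge> 1 \<Longrightarrow> sum_list (Cfive n) = 5 * fib (Suc n)"
  using Cblk_len_sum[of n] by (simp add: Cfive_def rep_sum)
lemma Cfive_1: "Cfive 1 = [1,1,1,1,1]" by (simp add: Cfive_def numeral_eq_Suc Cblk_def)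

definition L :: "nat \<Rightarrow> nat list" where "L k = concat (map Cfive [1..<k+1])"
lemma L_0[simp]: "L 0 = []" by (simp add: L_def)
lemma L_Suc: "L (Suc k) = L k @ Cfive (Suc k)" by (simp add: L_def)
lemma L_set: "set (L k) \<subseteq> {1,2}" using Cfive_set by (auto simp: L_def)
lemma L_len: "length (L k) + 5 = 5 * fib (k+2)"
proof (induction k)
  case (Suc k) then show ?case using fib_plus_2[of "k+1"] by (simp add: L_Suc Cfive_len)
qed simp
lemma L_sum: "sum_list (L k) + 10 = 5 * fib (k+3)"
proof (induction k)
  case 0 then show ?case by (simp add: numeral_3_eq_3)
next
  case (Suc k)
  have "sum_list (L (Suc k)) = sum_list (L k) + 5 * fib (k+2)"
    using Cfive_sum[of "Suc k"] by (simp add: L_Suc)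
  moreover have "fib (Suc k + 3) = fib (k+3) + fib (k+2)"
  proof -
    have a: "Suc k + 3 = Suc (Suc (k+2))" by simp
    have b: "k+3 = Suc (k+2)" by simp
    show ?thesis unfolding a b by (rule fib.simps(3))
  qed
  ultimately show ?case using Suc.IH by linarith
qed
lemma L_prefix: "k \<le> k' \<Longrightarrow> \<exists>r. L k' = L k @ r"
proof (induction k' rule: dec_induct)
  case (step m) then show ?case by (auto simp: L_Suc)
qed simp

lemma fib_ge: "n + 1 \<le> fib (n+2)"
proof (induction n)
  case (Suc n) then show ?case using fib_neq_0_nat[of "n+1"] fib_plus_2[of "Suc n"] by simp
qed (simp add: numeral_2_eq_2)

lemma cseq_L: "1 \<le> j \<Longrightarrow> j \<le> length (L k) \<Longrightarrow> cseq j = L k ! (j - 1)"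
proof -
  assume j: "1 \<le> j" "j \<le> length (L k)"
  have jj: "j \<le> length (L j)" using L_len[of j] fib_ge[of j] by linarith
  have jj2: "j - 1 < length (L j)" using jj j by linarith
  have c: "cseq j = L j ! (j - 1)" by (simp add: cseq_def L_def)
  show ?thesis
  proof (cases "j \<le> k")
    case True then obtain r where "L k = L j @ r" using L_prefix by blast
    then show ?thesis using c jj2 j by (simp add: nth_append)
  next
    case False then obtain r where "L j = L k @ r" using L_prefix[of k j] by auto
    moreover have "j - 1 < length (L k)" using j by linarith
    ultimately show ?thesis using c by (simp add: nth_append)
  qed
qed

lemma cseq_pos: "1 \<le> j \<Longrightarrow> cseq j \<in> {1,2}"
proof -
  assume j: "1 \<le> j"
  have "j \<le> length (L j)" using L_len[of j] fib_ge[of j] by linarith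
  then have "j - 1 < length (L j)" using j by linarith
  then have "L j ! (j - 1) \<in> {1,2}" using L_set[of j] nth_mem[of "j - 1" "L j"] by blast
  then show ?thesis using cseq_L[OF j, of j] \<open>j \<le> length (L j)\<close> by simp
qed

lemma aseq_Suc: "1 \<le> j \<Longrightarrow> aseq (Suc j) = aseq j + cseq j"
proof -
  assume j: "1 \<le> j"
  have "{1..<Suc j} = insert j {1..<j}" using j by auto
  then show ?thesis unfolding aseq_def by simp
qed
lemma bseq_Suc: "1 \<le> j \<Longrightarrow> bseq (Suc j) = bseq j + cseq j + 1"
proof -
  assume j: "1 \<le> j"
  have "{1..<Suc j} = insert j {1..<j}" using j by auto
  then show ?thesis unfolding bseq_def dseq_def by simp
qed

lemma aseq_take: "j \<le> length (L k) \<Longrightarrow> aseq (Suc j) = 6 + sum_list (take j (L k))"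
proof (induction j)
  case 0 then show ?case by (simp add: aseq_def)
next
  case (Suc j)
  have c: "cseq (Suc j) = L k ! j" using cseq_L[of "Suc j" k] Suc.prems by simp
  have t: "take (Suc j) (L k) = take j (L k) @ [L k ! j]" using Suc.prems by (simp add: take_Suc_conv_app_nth)
  show ?case using aseq_Suc[of "Suc j"] Suc.IH Suc.prems c t by simp
qed

lemma bseq_take: "j \<le> length (L k) \<Longrightarrow> bseq (Suc j) = 12 + sum_list (take j (map Suc (L k)))"
proof (induction j)
  case 0 then show ?case by (simp add: bseq_def)
next
  case (Suc j)
  have c: "cseq (Suc j) = L k ! j" using cseq_L[of "Suc j" k] Suc.prems by simp
  have t: "take (Suc j) (map Suc (L k)) = take j (map Suc (L k)) @ [Suc (L k ! j)]" using Suc.prems by (simp add: take_Suc_conv_app_nth)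
  show ?case using bseq_Suc[of "Suc j"] Suc.IH Suc.prems c t by simp
qed


fun ps :: "nat list \<Rightarrow> nat set" where
  "ps [] = {0}"
| "ps (x#xs) = insert 0 ((+) x ` ps xs)"

lemma img_add_mem: "y \<in> (+) c ` S \<longleftrightarrow> c \<le> y \<and> y - c \<in> (S::nat set)"
proof
  assume "y \<in> (+) c ` S" then obtain x where "x \<in> S" "y = c + x" by auto
  then show "c \<le> y \<and> y - c \<in> S" by simp
next
  assume a: "c \<le> y \<and> y - c \<in> S"
  then have "y = c + (y - c)" by simp
  moreover have "y - c \<in> S" using a by simp
  ultimately show "y \<in> (+) c ` S" by (rule image_eqI)
qed

lemma ps_mem: "v \<in> ps (x#xs) \<longleftrightarrow> v = 0 \<or> (x \<le> v \<and> v - x \<in> ps xs)"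
  by (simp only: ps.simps insert_iff img_add_mem)

lemma ps_take: "ps xs = (\<lambda>u. sum_list (take u xs)) ` {..length xs}"
proof (induction xs)
  case Nil then show ?case by simp
next
  case (Cons x xs)
  have "(\<lambda>u. sum_list (take u (x#xs))) ` {..length (x#xs)}
     = insert 0 ((\<lambda>u. sum_list (take (Suc u) (x#xs))) ` {..length xs})"
    by (simp only: length_Cons atMost_Suc_eq_insert_0 image_insert image_image) simp
  also have "\<dots> = insert 0 ((+) x ` ps xs)" using Cons.IH by (simp add: image_image)
  finally show ?case by simp
qed

declare ps.simps(2)[simp del]

lemma G: "set w \<subseteq> {1,2} \<Longrightarrow>
  ((v \<in> ps (sigma w) \<or> (1 \<le> v \<and> v - 1 \<in> ps (map Suc w))) \<longleftrightarrow> v \<le> sum_list w + length w + 1)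
  \<and> \<not> (v \<in> ps (sigma w) \<and> 1 \<le> v \<and> v - 1 \<in> ps (map Suc w))"
proof (induction w arbitrary: v)
  case Nil then show ?case by auto
next
  case (Cons x w)
  have sw: "set w \<subseteq> {1,2}" and x: "x = 1 \<or> x = 2" using Cons.prems by auto
  show ?case
  proof (cases "x = 1")
    case True
    note IH = Cons.IH[OF sw, of "v - 2"]
    show ?thesis using IH True by (auto simp: ps_mem numeral_eq_Suc)
  next
    case False
    then have x2: "x = 2" using x by simp
    note IH = Cons.IH[OF sw, of "v - 3"]
    show ?thesis using IH x2 by (auto simp: ps_mem numeral_eq_Suc)
  qed
qed

lemma LOC: "set w \<subseteq> {1,2} \<Longrightarrow> u < length (sigma w) \<Longrightarrow> v < length w \<Longrightarrow>
  sum_list (take u (sigma w)) = sum_list (take v (map Suc w)) \<Longrightarrow>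
  sigma w ! u = 2 \<and> (w ! v = 2 \<longrightarrow> Suc u < length (sigma w) \<and> sigma w ! Suc u = 1)"
proof (induction w arbitrary: u v)
  case Nil then show ?case by simp
next
  case (Cons x w)
  have sw: "set w \<subseteq> {1,2}" and x: "x = 1 \<or> x = 2" using Cons.prems by auto
  show ?case
  proof (cases "x = 1")
    case True
    show ?thesis
    proof (cases u)
      case 0 then show ?thesis using True Cons.prems by (cases v) auto
    next
      case (Suc u') 
      show ?thesis
      proof (cases v)
        case 0 then show ?thesis using True Cons.prems Suc by auto
      next
        case (Suc v')
        then show ?thesis using True Cons.prems \<open>u = Suc u'\<close> Cons.IH[OF sw, of u' v'] by auto
      qed
    qed
  next
    case False
    then have x2: "x = 2" using x by simp
    show ?thesis
    proof (cases u)
      case 0 then show ?thesis using x2 Cons.prems by (cases v) auto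
    next
      case (Suc u1) 
      show ?thesis
      proof (cases u1)
        case 0 then show ?thesis using x2 Cons.prems Suc by (cases v) auto
      next
        case (Suc u')
        show ?thesis
        proof (cases v)
          case 0 then show ?thesis using x2 Cons.prems \<open>u = Suc u1\<close> Suc by auto
        next
          case (Suc v')
          then show ?thesis using x2 Cons.prems \<open>u = Suc u1\<close> \<open>u1 = Suc u'\<close> Cons.IH[OF sw, of u' v'] by auto
        qed
      qed
    qed
  qed
qed

lemma sum_map_Suc: "sum_list (map Suc xs) = sum_list xs + length xs"
  by (induction xs) auto

lemma fib4: "fib (n+4) = fib (n+3) + fib (n+2)"
  using fib_plus_2[of "n+2"] by (simp add: numeral_eq_Suc)
lemma fib3: "fib (n+3) = fib (n+2) + fib (n+1)"
  using fib_plus_2[of "n+1"] by (simp add: numeral_eq_Suc)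
lemma fibpos: "n \<ge> 1 \<Longrightarrow> fib n \<ge> 1"
  using fib_neq_0_nat[of n] by simp

lemma AF: assumes n: "n \<ge> 1" and u: "u \<le> 5 * fib (n+1)"
  shows "aseq (5 * fib (n+2) - 4 + u) = 5 * fib (n+3) - 4 + sum_list (take u (Cfive (Suc n)))"
proof -
  have ln: "length (L n) + 5 = 5 * fib (n+2)" by (rule L_len)
  have sn: "sum_list (L n) + 10 = 5 * fib (n+3)" by (rule L_sum)
  have lx: "length (Cfive (Suc n)) = 5 * fib (n+1)" using Cfive_len[of "Suc n"] by simp
  have e: "5 * fib (n+2) - 4 + u = Suc (length (L n) + u)" using ln by linarith
  have j: "length (L n) + u \<le> length (L (Suc n))" using u lx by (simp add: L_Suc)
  have "aseq (5 * fib (n+2) - 4 + u) = 6 + sum_list (take (length (L n) + u) (L (Suc n)))"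
    unfolding e by (rule aseq_take[OF j])
  also have "\<dots> = 6 + sum_list (L n) + sum_list (take u (Cfive (Suc n)))"
    by (simp add: L_Suc)
  finally show ?thesis using sn by linarith
qed

lemma BF: assumes n: "n \<ge> 1" and u: "u \<le> 5 * fib n"
  shows "bseq (5 * fib (n+1) - 4 + u) = 5 * fib (n+3) - 3 + sum_list (take u (map Suc (Cfive n)))"
proof -
  obtain m where m: "n = Suc m" using n by (cases n) auto
  have ln: "length (L m) + 5 = 5 * fib (m+2)" by (rule L_len)
  have sn: "sum_list (L m) + 10 = 5 * fib (m+3)" by (rule L_sum)
  have lx: "length (Cfive n) = 5 * fib n" using Cfive_len[OF n] by simp
  have e: "5 * fib (n+1) - 4 + u = Suc (length (L m) + u)" using ln m by simp
  have j: "length (L m) + u \<le> length (L n)" using u lx m by (simp add: L_Suc)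
  have "bseq (5 * fib (n+1) - 4 + u) = 12 + sum_list (take (length (L m) + u) (map Suc (L n)))"
    unfolding e by (rule bseq_take[OF j])
  also have "\<dots> = 12 + sum_list (L m) + length (L m) + sum_list (take u (map Suc (Cfive n)))"
    using m by (simp add: L_Suc sum_map_Suc)
  moreover have "fib (n+3) = fib (m+4)" using m by (simp add: add.commute)
  ultimately show ?thesis using sn ln fib4[of m] by linarith
qed

lemma cA: assumes n: "n \<ge> 1" and u: "u < 5 * fib (n+1)"
  shows "cseq (5 * fib (n+2) - 4 + u) = Cfive (Suc n) ! u"
proof -
  have ln: "length (L n) + 5 = 5 * fib (n+2)" by (rule L_len)
  have lx: "length (Cfive (Suc n)) = 5 * fib (n+1)" using Cfive_len[of "Suc n"] by simp
  have e: "5 * fib (n+2) - 4 + u = Suc (length (L n) + u)" using ln by linarith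
  have "cseq (5 * fib (n+2) - 4 + u) = L (Suc n) ! (length (L n) + u)"
    unfolding e using cseq_L[of "Suc (length (L n) + u)" "Suc n"] u lx by (simp add: L_Suc)
  then show ?thesis by (simp add: L_Suc nth_append)
qed

lemma cB: assumes n: "n \<ge> 1" and u: "u < 5 * fib n"
  shows "cseq (5 * fib (n+1) - 4 + u) = Cfive n ! u"
proof -
  obtain m where m: "n = Suc m" using n by (cases n) auto
  have ln: "length (L m) + 5 = 5 * fib (m+2)" by (rule L_len)
  have lx: "length (Cfive n) = 5 * fib n" using Cfive_len[OF n] by simp
  have e: "5 * fib (n+1) - 4 + u = Suc (length (L m) + u)" using ln m by simp
  have "cseq (5 * fib (n+1) - 4 + u) = L n ! (length (L m) + u)"
    unfolding e using cseq_L[of "Suc (length (L m) + u)" n] u lx m by (simp add: L_Suc)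
  then show ?thesis using m by (simp add: L_Suc nth_append)
qed



lemma ivl_img: "{s..s+N} = (+) s ` {..(N::nat)}"
proof (rule set_eqI)
  fix y show "y \<in> {s..s+N} \<longleftrightarrow> y \<in> (+) s ` {..N}"
    unfolding img_add_mem by auto
qed

lemma block:
  fixes n :: nat
  assumes n: "n \<ge> 1"
  shows
   "(\<forall>p q. 5 * fib (n+2) - 4 \<le> p \<and> p < 5 * fib (n+3) - 4 \<and>
           5 * fib (n+1) - 4 \<le> q \<and> q < 5 * fib (n+2) - 4 \<and>
           bseq q = aseq p + 1 \<longrightarrow>
        (bseq (q+1) = bseq q + 3 \<longrightarrow>
            aseq (p+1) = aseq p + 2 \<and> aseq (p+2) = aseq p + 3 \<and> bseq (q+1) = aseq (p+2) + 1) \<and>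
        (bseq (q+1) = bseq q + 2 \<longrightarrow>
            aseq (p+1) = aseq p + 2 \<and> bseq (q+1) = aseq (p+1) + 1))
  \<and> (aseq ` {5 * fib (n+2) - 4 .. 5 * fib (n+2) - 4 + 5 * fib (n+1)}
       \<union> bseq ` {5 * fib (n+1) - 4 .. 5 * fib (n+1) - 4 + 5 * fib n}
       = {5 * fib (n+3) - 4 .. 5 * fib (n+4) - 3})
  \<and> (aseq ` {5 * fib (n+2) - 4 .. 5 * fib (n+2) - 4 + 5 * fib (n+1)}
       \<inter> bseq ` {5 * fib (n+1) - 4 .. 5 * fib (n+1) - 4 + 5 * fib n} = {})"
proof -
  define W where "W = Cfive n"
  define X where "X = Cfive (Suc n)"
  define Y where "Y = map Suc W"
  define s where "s = 5 * fib (n+2) - 4"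
  define t where "t = 5 * fib (n+1) - 4"
  define \<alpha> where "\<alpha> = 5 * fib (n+3) - 4"
  have XW: "X = sigma W" unfolding X_def W_def using Cfive_Suc[OF n] .
  have sW: "set W \<subseteq> {1,2}" unfolding W_def by (rule Cfive_set)
  have lW: "length W = 5 * fib n" unfolding W_def by (rule Cfive_len[OF n])
  have sumW: "sum_list W = 5 * fib (n+1)" unfolding W_def using Cfive_sum[OF n] by simp
  have lX: "length X = 5 * fib (n+1)" unfolding X_def using Cfive_len[of "Suc n"] by simp
  have lY: "length Y = 5 * fib n" unfolding Y_def using lW by simp
  have f1: "fib (n+1) \<ge> 1" "fib (n+2) \<ge> 1" "fib (n+3) \<ge> 1" using fibpos by auto
  have f3: "fib (n+3) = fib (n+2) + fib (n+1)" by (rule fib3)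
  have f4: "fib (n+4) = fib (n+3) + fib (n+2)" by (rule fib4)
  have f2: "fib (n+2) = fib (n+1) + fib n" using fib_plus_2[of n] by simp
  have AFx: "aseq (s + u) = \<alpha> + sum_list (take u X)" if "u \<le> 5 * fib (n+1)" for u
    using AF[OF n that] unfolding s_def \<alpha>_def X_def .
  have BFx: "bseq (t + u) = \<alpha> + 1 + sum_list (take u Y)" if "u \<le> 5 * fib n" for u
    using BF[OF n that] f1 unfolding t_def \<alpha>_def Y_def W_def by simp
  have Aimg: "aseq ` {s .. s + 5 * fib (n+1)} = (+) \<alpha> ` ps X"
  proof -
    have "aseq ` {s .. s + 5 * fib (n+1)} = (\<lambda>u. aseq (s+u)) ` {..5 * fib (n+1)}"
      by (simp add: ivl_img image_image)
    also have "\<dots> = (\<lambda>u. \<alpha> + sum_list (take u X)) ` {..length X}"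
      using AFx lX by (auto intro!: image_cong)
    also have "\<dots> = (+) \<alpha> ` ps X" by (simp add: ps_take image_image)
    finally show ?thesis .
  qed
  have Bimg: "bseq ` {t .. t + 5 * fib n} = (+) (\<alpha>+1) ` ps Y"
  proof -
    have "bseq ` {t .. t + 5 * fib n} = (\<lambda>u. bseq (t+u)) ` {..5 * fib n}"
      by (simp add: ivl_img image_image)
    also have "\<dots> = (\<lambda>u. \<alpha> + 1 + sum_list (take u Y)) ` {..length Y}"
      using BFx lY by (auto intro!: image_cong)
    also have "\<dots> = (+) (\<alpha>+1) ` ps Y" by (simp add: ps_take image_image)
    finally show ?thesis .
  qed
  have Gv: "((y \<in> (+) \<alpha> ` ps X \<or> y \<in> (+) (\<alpha>+1) ` ps Y) \<longleftrightarrow> \<alpha> \<le> y \<and> y \<le> \<alpha> + 5 * fib (n+2) + 1)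
      \<and> \<not> (y \<in> (+) \<alpha> ` ps X \<and> y \<in> (+) (\<alpha>+1) ` ps Y)" for y
  proof (cases "\<alpha> \<le> y")
    case True
    have g: "((y-\<alpha> \<in> ps (sigma W) \<or> (1 \<le> y-\<alpha> \<and> y-\<alpha> - 1 \<in> ps (map Suc W))) \<longleftrightarrow> y-\<alpha> \<le> sum_list W + length W + 1)
      \<and> \<not> (y-\<alpha> \<in> ps (sigma W) \<and> 1 \<le> y-\<alpha> \<and> y-\<alpha> - 1 \<in> ps (map Suc W))"
      by (rule G[OF sW])
    have e: "y - \<alpha> - 1 = y - (\<alpha>+1)" by simp
    show ?thesis using g True unfolding img_add_mem XW[symmetric] Y_def[symmetric] e sumW lW f2
      by auto
  next
    case False then show ?thesis unfolding img_add_mem by auto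
  qed
  have P2: "aseq ` {s .. s + 5 * fib (n+1)} \<union> bseq ` {t .. t + 5 * fib n} = {\<alpha> .. 5 * fib (n+4) - 3}"
  proof -
    have e: "\<alpha> + 5 * fib (n+2) + 1 = 5 * fib (n+4) - 3" unfolding \<alpha>_def using f4 f1 by linarith
    show ?thesis unfolding Aimg Bimg
    proof (rule set_eqI)
      fix y
      have "(y \<in> (+) \<alpha> ` ps X \<or> y \<in> (+) (\<alpha>+1) ` ps Y) \<longleftrightarrow> \<alpha> \<le> y \<and> y \<le> 5 * fib (n+4) - 3"
        using conjunct1[OF Gv[of y]] unfolding e .
      then show "y \<in> (+) \<alpha> ` ps X \<union> (+) (\<alpha>+1) ` ps Y \<longleftrightarrow> y \<in> {\<alpha> .. 5 * fib (n+4) - 3}"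
        unfolding Un_iff atLeastAtMost_iff .
    qed
  qed
  have P3: "aseq ` {s .. s + 5 * fib (n+1)} \<inter> bseq ` {t .. t + 5 * fib n} = {}"
    unfolding Aimg Bimg using Gv by blast
  have P1: "\<forall>p q. 5 * fib (n+2) - 4 \<le> p \<and> p < 5 * fib (n+3) - 4 \<and>
           5 * fib (n+1) - 4 \<le> q \<and> q < 5 * fib (n+2) - 4 \<and>
           bseq q = aseq p + 1 \<longrightarrow>
        (bseq (q+1) = bseq q + 3 \<longrightarrow>
            aseq (p+1) = aseq p + 2 \<and> aseq (p+2) = aseq p + 3 \<and> bseq (q+1) = aseq (p+2) + 1) \<and>
        (bseq (q+1) = bseq q + 2 \<longrightarrow>
            aseq (p+1) = aseq p + 2 \<and> bseq (q+1) = aseq (p+1) + 1)"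
  proof (intro allI impI)
    fix p q
    assume H: "5 * fib (n+2) - 4 \<le> p \<and> p < 5 * fib (n+3) - 4 \<and>
           5 * fib (n+1) - 4 \<le> q \<and> q < 5 * fib (n+2) - 4 \<and> bseq q = aseq p + 1"
    have p: "s \<le> p" "p < 5 * fib (n+3) - 4" and q: "t \<le> q" "q < 5 * fib (n+2) - 4"
      and eq: "bseq q = aseq p + 1" using H unfolding s_def t_def by auto
    define u where "u = p - s"
    define v where "v = q - t"
    have pu: "p = s + u" and u: "u < 5 * fib (n+1)" using p f3 f1 unfolding u_def s_def by auto
    have qv: "q = t + v" and v: "v < 5 * fib n" using q f2 f1 unfolding v_def t_def by auto
    have p1: "p \<ge> 1" using p f1 unfolding s_def by linarith
    have q1: "q \<ge> 1" using q f1 unfolding t_def by linarith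
    have ap: "aseq p = \<alpha> + sum_list (take u X)" using AFx[of u] u pu by simp
    have bq: "bseq q = \<alpha> + 1 + sum_list (take v Y)" using BFx[of v] v qv by simp
    have loc: "X ! u = 2 \<and> (W ! v = 2 \<longrightarrow> Suc u < length X \<and> X ! Suc u = 1)"
      using LOC[OF sW, of u v] ap bq eq u v lX lW unfolding XW[symmetric] Y_def[symmetric] by simp
    have cp: "cseq p = X ! u" using cA[OF n u] pu unfolding s_def X_def by simp
    have cq: "cseq q = W ! v" using cB[OF n v] qv unfolding t_def W_def by simp
    have ap1: "aseq (p+1) = aseq p + 2" using aseq_Suc[OF p1] cp loc by simp
    have bq1: "bseq (q+1) = bseq q + cseq q + 1" using bseq_Suc[OF q1] by simp
    show "(bseq (q+1) = bseq q + 3 \<longrightarrow>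
            aseq (p+1) = aseq p + 2 \<and> aseq (p+2) = aseq p + 3 \<and> bseq (q+1) = aseq (p+2) + 1) \<and>
        (bseq (q+1) = bseq q + 2 \<longrightarrow>
            aseq (p+1) = aseq p + 2 \<and> bseq (q+1) = aseq (p+1) + 1)"
    proof (intro conjI impI)
      assume b3: "bseq (q+1) = bseq q + 3"
      then have "W ! v = 2" using bq1 cq by simp
      then have l2: "Suc u < length X" "X ! Suc u = 1" using loc by auto
      have "cseq (p+1) = X ! Suc u" using cA[OF n, of "Suc u"] l2 lX pu unfolding s_def X_def by simp
      then have "aseq (p+2) = aseq (p+1) + 1" using aseq_Suc[of "p+1"] l2 by simp
      then show "aseq (p+2) = aseq p + 3" using ap1 by simp
      then show "bseq (q+1) = aseq (p+2) + 1" using eq b3 by simp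
    next
      show "aseq (p+1) = aseq p + 2" by (rule ap1)
    next
      show "aseq (p+1) = aseq p + 2" by (rule ap1)
    next
      assume b2: "bseq (q+1) = bseq q + 2"
      show "bseq (q+1) = aseq (p+1) + 1" using b2 eq ap1 by simp
    qed
  qed
  show ?thesis using P1 P2[unfolded s_def t_def \<alpha>_def] P3[unfolded s_def t_def] by (intro conjI)
qed

lemma findblk: assumes "5 * fib j0 \<le> z" shows "\<exists>i\<ge>j0. 5 * fib i \<le> z \<and> z < 5 * fib (Suc i)"
proof -
  have ex: "\<exists>i. z < 5 * fib i" using fib_ge[of z] by (intro exI[of _ "z+2"]) linarith
  define i1 where "i1 = (LEAST i. z < 5 * fib i)"
  have z1: "z < 5 * fib i1" unfolding i1_def by (rule LeastI_ex[OF ex])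
  have gt: "j0 < i1"
  proof (rule ccontr)
    assume "\<not> j0 < i1" then have "fib i1 \<le> fib j0" by (intro fib_mono) simp
    then show False using z1 assms by linarith
  qed
  then obtain i where i: "i1 = Suc i" "j0 \<le> i" by (cases i1) auto
  have "\<not> z < 5 * fib i" unfolding i1_def[symmetric] using i by (intro not_less_Least) (simp add: i1_def[symmetric])
  then show ?thesis using i z1 by (intro exI[of _ i]) auto
qed

lemma aseq_ge: "aseq j \<ge> 6" by (simp add: aseq_def)
lemma bseq_ge: "bseq j \<ge> 12" by (simp add: bseq_def)

lemma L1: "L (Suc 0) = replicate 5 1" using Cfive_1 by (simp add: L_def numeral_eq_Suc)

lemma aseq_small: "1 \<le> j \<Longrightarrow> j \<le> 6 \<Longrightarrow> aseq j = j + 5"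
proof -
  assume j: "1 \<le> j" "j \<le> 6"
  then obtain i where i: "j = Suc i" "i \<le> 5" by (cases j) auto
  have "i \<le> length (L 1)" using i by (simp add: L1)
  then have "aseq (Suc i) = 6 + sum_list (take i (L 1))" by (rule aseq_take)
  then show ?thesis using i by (simp add: L1 take_replicate sum_list_replicate min_def)
qed

lemma amono_le: assumes "1 \<le> j" "j \<le> j'" shows "aseq j \<le> aseq j'"
  using assms(2)
proof (induction j' rule: dec_induct)
  case (step m) then show ?case using aseq_Suc[of m] assms(1) by simp
qed simp

lemma amono: "1 \<le> j \<Longrightarrow> j < j' \<Longrightarrow> aseq j < aseq j'"
proof -
  assume j: "1 \<le> j" "j < j'"
  have "aseq (Suc j) \<le> aseq j'" using j by (intro amono_le) auto
  moreover have "aseq (Suc j) = aseq j + cseq j" using aseq_Suc j by simp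
  moreover have "cseq j \<ge> 1" using cseq_pos[of j] j by auto
  ultimately show ?thesis by linarith
qed

lemma bmono_le: assumes "1 \<le> j" "j \<le> j'" shows "bseq j \<le> bseq j'"
  using assms(2)
proof (induction j' rule: dec_induct)
  case (step m) then show ?case using bseq_Suc[of m] assms(1) by simp
qed simp

lemma bmono: "1 \<le> j \<Longrightarrow> j < j' \<Longrightarrow> bseq j + 2 \<le> bseq j'"
proof -
  assume j: "1 \<le> j" "j < j'"
  have "bseq (Suc j) \<le> bseq j'" using j by (intro bmono_le) auto
  moreover have "bseq (Suc j) = bseq j + cseq j + 1" using bseq_Suc j by simp
  moreover have "cseq j \<ge> 1" using cseq_pos[of j] j by auto
  ultimately show ?thesis by linarith
qed

lemma aidx: assumes "6 \<le> m" shows "\<exists>n\<ge>1. 5 * fib (n+2) - 4 \<le> m \<and> m < 5 * fib (n+3) - 4"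
proof -
  have "5 * fib 3 \<le> m + 4" using assms by simp
  then obtain i where i: "i \<ge> 3" "5 * fib i \<le> m + 4" "m + 4 < 5 * fib (Suc i)" using findblk by blast
  then have e: "i - 2 + 2 = i" "i - 2 + 3 = Suc i" by auto
  have "5 * fib (i - 2 + 2) - 4 \<le> m \<and> m < 5 * fib (i - 2 + 3) - 4" unfolding e using i by linarith
  then show ?thesis using i by (intro exI[of _ "i - 2"]) auto
qed

lemma bidx: assumes "1 \<le> k" shows "\<exists>n\<ge>1. 5 * fib (n+1) - 4 \<le> k \<and> k < 5 * fib (n+2) - 4"
proof -
  have "5 * fib 2 \<le> k + 4" using assms by simp
  then obtain i where i: "i \<ge> 2" "5 * fib i \<le> k + 4" "k + 4 < 5 * fib (Suc i)" using findblk by blast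
  then have e: "i - 1 + 1 = i" "i - 1 + 2 = Suc i" by auto
  have "5 * fib (i - 1 + 1) - 4 \<le> k \<and> k < 5 * fib (i - 1 + 2) - 4" unfolding e using i by linarith
  then show ?thesis using i by (intro exI[of _ "i - 1"]) auto
qed

lemma ablk_vals: assumes n: "n \<ge> 1" and m: "5 * fib (n+2) - 4 \<le> m" "m < 5 * fib (n+3) - 4"
  shows "5 * fib (n+3) - 4 \<le> aseq m \<and> aseq m < 5 * fib (n+4) - 4"
proof -
  have f1: "fib (n+2) \<ge> 1" using fibpos by simp
  have a0: "aseq (5 * fib (n+2) - 4) = 5 * fib (n+3) - 4" using AF[OF n, of 0] by simp
  have a1: "aseq (5 * fib (Suc n+2) - 4) = 5 * fib (Suc n+3) - 4" using AF[of "Suc n" 0] by simp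
  have e: "Suc n + 2 = n + 3" "Suc n + 3 = n + 4" by simp_all
  have "aseq (5 * fib (n+2) - 4) \<le> aseq m" using m f1 by (intro amono_le) auto
  moreover have "aseq m < aseq (5 * fib (n+3) - 4)" using m f1 by (intro amono) auto
  ultimately show ?thesis using a0 a1 unfolding e by simp
qed

lemma bblk_vals: assumes n: "n \<ge> 1" and k: "5 * fib (n+1) - 4 \<le> k" "k < 5 * fib (n+2) - 4"
  shows "5 * fib (n+3) - 3 \<le> bseq k \<and> bseq k + 2 \<le> 5 * fib (n+4) - 3"
proof -
  have f1: "fib (n+1) \<ge> 1" using fibpos by simp
  have b0: "bseq (5 * fib (n+1) - 4) = 5 * fib (n+3) - 3" using BF[OF n, of 0] by simp
  have b1: "bseq (5 * fib (Suc n+1) - 4) = 5 * fib (Suc n+3) - 3" using BF[of "Suc n" 0] by simp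
  have e: "Suc n + 1 = n + 2" "Suc n + 3 = n + 4" by simp_all
  have "bseq (5 * fib (n+1) - 4) \<le> bseq k" using k f1 by (intro bmono_le) auto
  moreover have "bseq k + 2 \<le> bseq (5 * fib (n+2) - 4)" using k f1 by (intro bmono) auto
  ultimately show ?thesis using b0 b1 unfolding e by simp
qed

theorem lemma4p3:
  fixes n :: nat
  assumes "n \<ge> 1"
  shows
   "(\<forall>p q. 5 * fib (n+2) - 4 \<le> p \<and> p < 5 * fib (n+3) - 4 \<and>
           5 * fib (n+1) - 4 \<le> q \<and> q < 5 * fib (n+2) - 4 \<and>
           bseq q = aseq p + 1 \<longrightarrow>
        (bseq (q+1) = bseq q + 3 \<longrightarrow>
            aseq (p+1) = aseq p + 2 \<and> aseq (p+2) = aseq p + 3 \<and> bseq (q+1) = aseq (p+2) + 1) \<and>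
        (bseq (q+1) = bseq q + 2 \<longrightarrow>
            aseq (p+1) = aseq p + 2 \<and> bseq (q+1) = aseq (p+1) + 1))
  \<and> (aseq ` {5 * fib (n+2) - 4 .. 5 * fib (n+2) - 4 + 5 * fib (n+1)}
       \<union> bseq ` {5 * fib (n+1) - 4 .. 5 * fib (n+1) - 4 + 5 * fib n}
       = {5 * fib (n+3) - 4 .. 5 * fib (n+4) - 3})
  \<and> (aseq ` {5 * fib (n+2) - 4 .. 5 * fib (n+2) - 4 + 5 * fib (n+1)}
       \<inter> bseq ` {5 * fib (n+1) - 4 .. 5 * fib (n+1) - 4 + 5 * fib n} = {})
  \<and> (aseq ` {1..} \<inter> bseq ` {1..} = {})
  \<and> (aseq ` {1..} \<union> bseq ` {1..} = {6..})"
proof -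
  have IV: "aseq ` {1..} \<inter> bseq ` {1..} = {}"
  proof (rule ccontr)
    assume "aseq ` {1..} \<inter> bseq ` {1..} \<noteq> {}"
    then obtain m k where mk: "m \<ge> 1" "k \<ge> 1" "aseq m = bseq k" by auto
    show False
    proof (cases "m \<le> 5")
      case True then show False using aseq_small[of m] mk bseq_ge[of k] by simp
    next
      case False
      obtain N where N: "N \<ge> 1" "5 * fib (N+2) - 4 \<le> m" "m < 5 * fib (N+3) - 4" using aidx[of m] False by auto
      obtain N' where N': "N' \<ge> 1" "5 * fib (N'+1) - 4 \<le> k" "k < 5 * fib (N'+2) - 4" using bidx[of k] mk by auto
      have av: "5 * fib (N+3) - 4 \<le> aseq m \<and> aseq m < 5 * fib (N+4) - 4" by (rule ablk_vals[OF N])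
      have bv: "5 * fib (N'+3) - 3 \<le> bseq k \<and> bseq k + 2 \<le> 5 * fib (N'+4) - 3" by (rule bblk_vals[OF N'])
      consider "N < N'" | "N' < N" | "N = N'" by linarith
      then show False
      proof cases
        case 1 then have "fib (N+4) \<le> fib (N'+3)" by (intro fib_mono) simp
        then show False using av bv mk by linarith
      next
        case 2 then have "fib (N'+4) \<le> fib (N+3)" by (intro fib_mono) simp
        then show False using av bv mk by linarith
      next
        case 3
        have B: "aseq ` {5 * fib (N+2) - 4 .. 5 * fib (N+2) - 4 + 5 * fib (N+1)}
           \<inter> bseq ` {5 * fib (N+1) - 4 .. 5 * fib (N+1) - 4 + 5 * fib N} = {}"
          using block[OF N(1)] by blast
        have f: "fib (N+3) = fib (N+2) + fib (N+1)" "fib (N+2) = fib (N+1) + fib N" 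
          using fib3[of N] fib_plus_2[of N] by simp_all
        have f1: "fib (N+1) \<ge> 1" using fibpos by simp
        have "m \<in> {5 * fib (N+2) - 4 .. 5 * fib (N+2) - 4 + 5 * fib (N+1)}" using N f f1 by auto
        moreover have "k \<in> {5 * fib (N+1) - 4 .. 5 * fib (N+1) - 4 + 5 * fib N}" using N' 3 f f1 by auto
        ultimately show False using B mk by blast
      qed
    qed
  qed
  have V: "aseq ` {1..} \<union> bseq ` {1..} = {6..}"
  proof (rule set_eqI)
    fix y
    show "y \<in> aseq ` {1..} \<union> bseq ` {1..} \<longleftrightarrow> y \<in> {6..}"
    proof
      assume "y \<in> aseq ` {1..} \<union> bseq ` {1..}"
      then show "y \<in> {6..}" using aseq_ge bseq_ge by (auto intro: order_trans[of 6 12])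
    next
      assume y: "y \<in> {6..}"
      show "y \<in> aseq ` {1..} \<union> bseq ` {1..}"
      proof (cases "y \<le> 10")
        case True
        then have "aseq (y - 5) = y" using y aseq_small[of "y-5"] by simp
        moreover have "y - 5 \<in> {1..}" using y by simp
        ultimately show ?thesis by (metis UnI1 image_eqI)
      next
        case False
        have "5 * fib 4 \<le> y + 4" using False by simp
        then obtain i where i: "i \<ge> 4" "5 * fib i \<le> y + 4" "y + 4 < 5 * fib (Suc i)" using findblk by blast
        define N where "N = i - 3"
        have N1: "N \<ge> 1" and e: "N + 3 = i" "N + 4 = Suc i" using i unfolding N_def by auto
        have "y \<in> {5 * fib (N+3) - 4 .. 5 * fib (N+4) - 3}" using i unfolding e by auto
        then have "y \<in> aseq ` {5 * fib (N+2) - 4 .. 5 * fib (N+2) - 4 + 5 * fib (N+1)}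
          \<union> bseq ` {5 * fib (N+1) - 4 .. 5 * fib (N+1) - 4 + 5 * fib N}" using block[OF N1] by blast
        moreover have "fib (N+2) \<ge> 1" "fib (N+1) \<ge> 1" using fibpos by auto
        then have "{5 * fib (N+2) - 4 .. 5 * fib (N+2) - 4 + 5 * fib (N+1)} \<subseteq> {1..}"
          "{5 * fib (N+1) - 4 .. 5 * fib (N+1) - 4 + 5 * fib N} \<subseteq> {1..}" by auto
        ultimately show ?thesis by blast
      qed
    qed
  qed
  show ?thesis using block[OF assms] IV V by blast
qed
end
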